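(* Let $q$ be an odd prime power, let $f$ be a normal planar function on $\mathbb F_{q^2}$, and let $\theta\in\mathbb F_{q^2}^*$ satisfy: for every $c\in\mathbb F_q$, $\#\{x\in\mathbb F_{q^2}:\theta_1f_0(x)-\theta_0f_1(x)=c\}$ equals $q+1$ if $c\neq0$ and $1$ if $c=0$ (so that $\mathcal U_\theta:=\{(x,t\theta):x\in\mathbb F_{q^2},t\in\mathbb F_q\}\cup\{(\infty)\}$ is a unital in $\Pi(f)$). Then for each $c\in\mathbb F_{q^2}$ the set \[\mathcal O_c:=\{(x,c):x\in\mathbb F_{q^2}\}\cup\{(\infty)\}\] is an oval in $\Pi(f)$, and $\mathcal U_\theta=\bigcup_{t\in\mathbb F_q}\mathcal O_{t\theta}$ is a union of ovals.
   Context: A function $f:\mathbb F_{q^2}\to\mathbb F_{q^2}$ is planar if for every $a\neq0$ the map $x\mapsto f(x+a)-f(x)$ is a bijection; it is a normal planar function if moreover $f(0)=0$ and, for all $a,b$, $f(a)=f(b)$ iff $a=\pm b$. For planar $f$, $\Pi(f)$ is the projective plane with points $(x,y)\in\mathbb F_{q^2}^2$ and $(a)$ for $a\in\mathbb F_{q^2}\cup\{\infty\}$, and lines $L_{a,b}=\{(x,f(x+a)-b):x\in\mathbb F_{q^2}\}\cup\{(a)\}$, $N_a=\{(a,y):y\in\mathbb F_{q^2}\}\cup\{(\infty)\}$ ($a,b\in\mathbb F_{q^2}$), $L_\infty=\{(a):a\in\mathbb F_{q^2}\cup\{\infty\}\}$, incidence being membership. A unital is a set of $q^3+1$ points meeting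 every line in $1$ or $q+1$ points. An oval in a projective plane of odd order $N$ is a set of $N+1$ points meeting every line in $0$, $1$ or $2$ points. A fixed $\xi\in\mathbb F_{q^2}\setminus\mathbb F_q$ is chosen; elements are written $\theta=\theta_0+\theta_1\xi$ and $f(x)=f_0(x)+f_1(x)\xi$ with $\theta_i\in\mathbb F_q$, $f_i(x)\in\mathbb F_q$. *)

theory Defs
  imports "HOL-Computational_Algebra.Primes"
begin

text \<open>The field F_{q^2} is a finite field type 'a with CARD('a) = q^2;
  its subfield F_q is the set of elements fixed by x \<mapsto> x^q.\<close>

definition subF :: "nat \<Rightarrow> 'a::field set" where
  "subF q = {x. x ^ q = x}"

definition coord0 :: "nat \<Rightarrow> 'a::field \<Rightarrow> 'a \<Rightarrow> 'a" where
  "coord0 q \<xi> \<theta> = fst (THE p. fst p \<in> subF q \<and> snd p \<in> subF q \<and> \<theta> = fst p + snd p * \<xi>)"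

definition coord1 :: "nat \<Rightarrow> 'a::field \<Rightarrow> 'a \<Rightarrow> 'a" where
  "coord1 q \<xi> \<theta> = snd (THE p. fst p \<in> subF q \<and> snd p \<in> subF q \<and> \<theta> = fst p + snd p * \<xi>)"

definition planar :: "('a::field \<Rightarrow> 'a) \<Rightarrow> bool" where
  "planar f \<longleftrightarrow> (\<forall>a. a \<noteq> 0 \<longrightarrow> bij (\<lambda>x. f (x + a) - f x))"

definition normal_planar :: "('a::field \<Rightarrow> 'a) \<Rightarrow> bool" where
  "normal_planar f \<longleftrightarrow> planar f \<and> f 0 = 0 \<and> (\<forall>a b. f a = f b \<longleftrightarrow> (a = b \<or> a = - b))"

text \<open>Points of Pi(f): affine points (x,y), and points at infinity (a),
  where Dir None represents (\<infinity>) and Dir (Some a) represents (a).\<close>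
datatype 'a pt = Aff 'a 'a | Dir "'a option"

datatype 'a ln = L 'a 'a | N 'a | Linf

fun line_pts :: "('a::field \<Rightarrow> 'a) \<Rightarrow> 'a ln \<Rightarrow> 'a pt set" where
  "line_pts f (L a b) = {Aff x (f (x + a) - b) | x. True} \<union> {Dir (Some a)}"
| "line_pts f (N a) = {Aff a y | y. True} \<union> {Dir None}"
| "line_pts f Linf = {Dir d | d. True}"

definition is_oval :: "('a::{field,finite} \<Rightarrow> 'a) \<Rightarrow> 'a pt set \<Rightarrow> bool" where
  "is_oval f S \<longleftrightarrow> finite S \<and> card S = card (UNIV :: 'a set) + 1 \<and>
     (\<forall>l. card (S \<inter> line_pts f l) \<le> 2)"

definition oval_set :: "'a \<Rightarrow> 'a pt set" where
  "oval_set c = {Aff x c | x. True} \<union> {Dir None}"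

definition unital_set :: "nat \<Rightarrow> 'a::field \<Rightarrow> 'a pt set" where
  "unital_set q \<theta> = {Aff x (t * \<theta>) | x t. t \<in> subF q} \<union> {Dir None}"

end

theory Submission
  imports Defs
begin

lemma oval_ok:
  fixes f :: "'a::{field,finite} \<Rightarrow> 'a"
  assumes npl: "normal_planar f"
  shows "is_oval f (oval_set c)"
proof -
  have nf: "\<And>a b. f a = f b \<longleftrightarrow> (a = b \<or> a = - b)" using npl by (simp add: normal_planar_def)
  have eq: "oval_set c = insert (Dir None) (range (\<lambda>x. Aff x c))"
    unfolding oval_set_def by auto
  have inj: "inj (\<lambda>x. Aff x c)" by (auto intro: injI)
  have fin: "finite (oval_set c)" unfolding eq by simp
  have cardS: "card (oval_set c) = card (UNIV :: 'a set) + 1"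
    unfolding eq by (subst card_insert_disjoint) (auto simp: card_image[OF inj])
  have lines: "card (oval_set c \<inter> line_pts f l) \<le> 2" for l
  proof (cases l)
    case (L a b)
    show ?thesis
    proof (cases "\<exists>x0. f (x0 + a) = b + c")
      case False
      have "oval_set c \<inter> line_pts f l = {}"
        using False unfolding L oval_set_def by (auto simp: algebra_simps)
      then show ?thesis by simp
    next
      case True
      then obtain x0 where x0: "f (x0 + a) = b + c" by blast
      have "oval_set c \<inter> line_pts f l \<subseteq> {Aff x0 c, Aff (- (x0 + a) - a) c}"
      proof
        fix p assume p: "p \<in> oval_set c \<inter> line_pts f l"
        then obtain x where px: "p = Aff x c" and fx: "f (x + a) - b = c"
          unfolding L oval_set_def by auto
        have "f (x + a) = f (x0 + a)" using fx x0 by (simp add: algebra_simps)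
        then have "x + a = x0 + a \<or> x + a = - (x0 + a)" using nf by blast
        then have "x = x0 \<or> x = - (x0 + a) - a"
          by (metis add_diff_cancel_right' add_right_cancel)
        then show "p \<in> {Aff x0 c, Aff (- (x0 + a) - a) c}" using px by auto
      qed
      then have "card (oval_set c \<inter> line_pts f l) \<le> card {Aff x0 c, Aff (- (x0 + a) - a) c}"
        by (intro card_mono) auto
      also have "\<dots> \<le> 2" by (simp add: card_insert_le_m1)
      finally show ?thesis .
    qed
  next
    case (N a)
    have "oval_set c \<inter> line_pts f l \<subseteq> {Aff a c, Dir None}"
      unfolding N oval_set_def by auto
    then have "card (oval_set c \<inter> line_pts f l) \<le> card {Aff a c, Dir None :: 'a pt}"
      by (intro card_mono) auto
    also have "\<dots> \<le> 2" by simp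
    finally show ?thesis .
  next
    case Linf
    have "oval_set c \<inter> line_pts f l \<subseteq> {Dir None}"
      unfolding Linf oval_set_def by auto
    then have "card (oval_set c \<inter> line_pts f l) \<le> card {Dir None :: 'a pt}"
      by (intro card_mono) auto
    then show ?thesis by simp
  qed
  show ?thesis unfolding is_oval_def using fin cardS lines by blast
qed

theorem proposition3p1:
  fixes f :: "'a::{field,finite} \<Rightarrow> 'a" and q :: nat and \<xi> \<theta> :: 'a
  assumes q_pp: "\<exists>p k. prime p \<and> k > 0 \<and> q = p ^ k"
    and q_odd: "odd q"
    and card: "card (UNIV :: 'a set) = q ^ 2"
    and xi: "\<xi> \<notin> subF q"
    and npl: "normal_planar f"
    and theta: "\<theta> \<noteq> 0"
    and count: "\<forall>c \<in> subF q.
       card {x. coord1 q \<xi> \<theta> * coord0 q \<xi> (f x) - coord0 q \<xi> \<theta> * coord1 q \<xi> (f x) = c}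
         = (if c \<noteq> 0 then q + 1 else 1)"
  shows "(\<forall>c. is_oval f (oval_set c)) \<and>
         unital_set q \<theta> = (\<Union>t \<in> subF q. oval_set (t * \<theta>))"
proof
  show "\<forall>c. is_oval f (oval_set c)" using oval_ok[OF npl] by blast
  have q0: "q \<noteq> 0" using q_odd by (metis even_zero)
  have "(0::'a) \<in> subF q" unfolding subF_def using q0 by simp
  then show "unital_set q \<theta> = (\<Union>t \<in> subF q. oval_set (t * \<theta>))"
    unfolding unital_set_def oval_set_def by blast
qed

end
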